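(* (a) Suppose $\mathbf{x}=(x_s)\in\mathbb{C}^{\mathbb{Z}^2}$ satisfies $Q^C(\mathbf{x})=0$ for all unit squares $C$, satisfies $\prod_{C\ni v}Q^C_v(\mathbf{x})=-\prod_{S\ni v}(x_v+x_{v_1})$ for all $v\in\mathbb{Z}^2$, and satisfies $x_v+x_{v+e_i}\neq0$ for all $v\in\mathbb{Z}^2$, $i\in\{1,2\}$. Then $\mathbf{x}$ extends to an array $\tilde{\mathbf{x}}=(x_s)\in\mathbb{C}^{\mathbb{Z}^2\cup E}$ such that for all $v\in\mathbb{Z}^2$, writing $z_{ij}=x_{v+(i,j)}$, $$z_{11}=3z_{00}+z_{10}+z_{01}+2\sqrt2\,z_{\frac120}z_{0\frac12},\quad z_{\frac121}=z_{\frac120}+\sqrt2\,z_{0\frac12},\quad z_{1\frac12}=z_{0\frac12}+\sqrt2\,z_{\frac120},$$ $$z_{\frac120}^2=z_{00}+z_{10},\qquad z_{0\frac12}^2=z_{00}+z_{01}.$$ (b) Conversely, if $\tilde{\mathbf{x}}=(x_s)\in\mathbb{C}^{\mathbb{Z}^2\cup E}$ satisfies these five equations for all $v\in\mathbb{Z}^2$, then its restriction $\mathbf{x}$ to $\mathbb{Z}^2$ satisfies $Q^C(\mathbf{x})=0$ for all unit squares $C$ and $\prod_{C\ni v}Q^C_v(\mathbf{x})=-\prod_{S\ni v}(x_v+x_{v_1})$ for all $v\in\mathbb{Z}^2$.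
   Context: $e_1=(1,0)$, $e_2=(0,1)$; $E=\mathbb{Z}^2+\{(\frac12,0),(0,\frac12)\}$ is the set of midpoints of unit edges. For a unit square $C$ with vertex values $z_{00},z_{10},z_{01},z_{11}$ (via $C\cong\{0,1\}^2$), $Q^C(\mathbf{x})=z_{00}^2+z_{10}^2+z_{01}^2+z_{11}^2-2(z_{00}z_{10}+z_{10}z_{11}+z_{11}z_{01}+z_{01}z_{00})-6(z_{00}z_{11}+z_{10}z_{01})$; for a vertex $v$ of $C$ with labeling chosen so that $z_{00}=x_v$, $Q^C_v(\mathbf{x})=\frac{1}{2\sqrt2}(z_{11}-z_{10}-z_{01}-3z_{00})$. In the products, $C$ ranges over the $4$ unit squares containing $v$ and $S$ over the $4$ unit edges containing $v$, $v_1$ being the other endpoint of $S$. *)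

theory Defs
  imports Complex_Main
begin

text \<open>Vertices of Z^2 are pairs of integers. A unit square C is indexed by its
lower-left corner c = (a,b); its vertices are identified with {0,1}^2 via
z_ij = x (a+i, b+j).\<close>

definition QC :: "(int \<times> int \<Rightarrow> complex) \<Rightarrow> int \<times> int \<Rightarrow> complex" where
  "QC x c = (case c of (a, b) \<Rightarrow>
     let z00 = x (a, b); z10 = x (a+1, b); z01 = x (a, b+1); z11 = x (a+1, b+1) in
     z00^2 + z10^2 + z01^2 + z11^2
       - 2 * (z00*z10 + z10*z11 + z11*z01 + z01*z00)
       - 6 * (z00*z11 + z10*z01))"

text \<open>Q^C_v for the unit square C containing v that lies in the quadrant direction
(s1,s2) \<in> {-1,1}^2 from v; labeling with z00 = x_v, z10 = x_{v+(s1,0)},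
z01 = x_{v+(0,s2)}, z11 = x_{v+(s1,s2)} (opposite vertex).\<close>

definition QCv :: "(int \<times> int \<Rightarrow> complex) \<Rightarrow> int \<times> int \<Rightarrow> int \<Rightarrow> int \<Rightarrow> complex" where
  "QCv x v s1 s2 = (case v of (a, b) \<Rightarrow>
     (x (a+s1, b+s2) - x (a+s1, b) - x (a, b+s2) - 3 * x (a, b))
       / (2 * complex_of_real (sqrt 2)))"

definition prodQCv :: "(int \<times> int \<Rightarrow> complex) \<Rightarrow> int \<times> int \<Rightarrow> complex" where
  "prodQCv x v = (\<Prod>s1\<in>{-1,1::int}. \<Prod>s2\<in>{-1,1::int}. QCv x v s1 s2)"

definition prodEdges :: "(int \<times> int \<Rightarrow> complex) \<Rightarrow> int \<times> int \<Rightarrow> complex" where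
  "prodEdges x v = (\<Prod>d\<in>{(1,0),(-1,0),(0,1),(0,-1::int)}.
       x v + x (fst v + fst d, snd v + snd d))"

text \<open>Arrays on Z^2 \<union> E are modelled as functions on R^2 (only values on
Z^2 \<union> E matter). The five equations at vertex v = (a,b), z_ij = xt (v + (i,j)).\<close>
definition ext_eqs :: "(real \<times> real \<Rightarrow> complex) \<Rightarrow> int \<times> int \<Rightarrow> bool" where
  "ext_eqs xt v = (case v of (a, b) \<Rightarrow>
     let z = (\<lambda>i j. xt (real_of_int a + i, real_of_int b + j)); r2 = complex_of_real (sqrt 2) in
       z 1 1 = 3 * z 0 0 + z 1 0 + z 0 1 + 2 * r2 * z (1/2) 0 * z 0 (1/2)
     \<and> z (1/2) 1 = z (1/2) 0 + r2 * z 0 (1/2)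
     \<and> z 1 (1/2) = z 0 (1/2) + r2 * z (1/2) 0
     \<and> (z (1/2) 0)^2 = z 0 0 + z 1 0
     \<and> (z 0 (1/2))^2 = z 0 0 + z 0 1)"

definition restr :: "(real \<times> real \<Rightarrow> complex) \<Rightarrow> int \<times> int \<Rightarrow> complex" where
  "restr xt v = xt (real_of_int (fst v), real_of_int (snd v))"

end

theory Submission
  imports Defs
begin

definition r2 :: complex where "r2 = complex_of_real (sqrt 2)"
lemma r2sq: "r2^2 = 2"
  unfolding r2_def by (metis of_real_numeral of_real_power real_sqrt_pow2 zero_le_numeral)
lemma r2nz: "r2 \<noteq> 0" using r2sq by auto

definition q00 :: "(int \<times> int \<Rightarrow> complex) \<Rightarrow> int \<Rightarrow> int \<Rightarrow> complex" where
  "q00 x i j = (x(i+1,j+1) - x(i+1,j) - x(i,j+1) - 3*x(i,j))/(2*r2)"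
definition q10 :: "(int \<times> int \<Rightarrow> complex) \<Rightarrow> int \<Rightarrow> int \<Rightarrow> complex" where
  "q10 x i j = (x(i+1,j+1) + x(i,j) + 3*x(i+1,j) - x(i,j+1))/(2*r2)"
definition q01 :: "(int \<times> int \<Rightarrow> complex) \<Rightarrow> int \<Rightarrow> int \<Rightarrow> complex" where
  "q01 x i j = (x(i+1,j+1) + x(i,j) + 3*x(i,j+1) - x(i+1,j))/(2*r2)"
definition q11 :: "(int \<times> int \<Rightarrow> complex) \<Rightarrow> int \<Rightarrow> int \<Rightarrow> complex" where
  "q11 x i j = (3*x(i+1,j+1) + x(i+1,j) + x(i,j+1) - x(i,j))/(2*r2)"
definition S1 :: "(int \<times> int \<Rightarrow> complex) \<Rightarrow> int \<Rightarrow> int \<Rightarrow> complex" where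
  "S1 x i j = x(i,j) + x(i+1,j)"
definition S2 :: "(int \<times> int \<Rightarrow> complex) \<Rightarrow> int \<Rightarrow> int \<Rightarrow> complex" where
  "S2 x i j = x(i,j) + x(i,j+1)"

lemma QCv_eq: "QCv x (a,b) s1 s2 = (x (a+s1, b+s2) - x (a+s1, b) - x (a, b+s2) - 3 * x (a, b)) / (2*r2)"
  by (simp add: QCv_def r2_def)
lemma QC_eq: "QC x (a,b) = x(a,b)^2 + x(a+1,b)^2 + x(a,b+1)^2 + x(a+1,b+1)^2
   - 2 * (x(a,b)*x(a+1,b) + x(a+1,b)*x(a+1,b+1) + x(a+1,b+1)*x(a,b+1) + x(a,b+1)*x(a,b))
   - 6 * (x(a,b)*x(a+1,b+1) + x(a+1,b)*x(a,b+1))"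
  by (simp add: QC_def Let_def)

lemma div_neg2: "A = - B \<Longrightarrow> A/(2*r2) = - (B/(2*r2))" by simp
lemma QCv_q00: "QCv x (a,b) 1 1 = q00 x a b" by (simp add: QCv_eq q00_def)
lemma QCv_q01: "QCv x (a,b) 1 (-1) = - q01 x a (b-1)" unfolding QCv_eq q01_def by (rule div_neg2) simp
lemma QCv_q10: "QCv x (a,b) (-1) 1 = - q10 x (a-1) b" unfolding QCv_eq q10_def by (rule div_neg2) simp
lemma QCv_q11: "QCv x (a,b) (-1) (-1) = - q11 x (a-1) (b-1)" unfolding QCv_eq q11_def by (rule div_neg2) simp
lemma prodQCv_q: "prodQCv x (a,b) = - (q00 x a b * q01 x a (b-1) * q10 x (a-1) b * q11 x (a-1) (b-1))"
  by (simp add: prodQCv_def QCv_q00 QCv_q01 QCv_q10 QCv_q11)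
lemma prodEdges_S: "prodEdges x (a,b) = S1 x a b * S1 x (a-1) b * S2 x a b * S2 x a (b-1)"
  by (simp add: prodEdges_def S1_def S2_def add.commute)

lemma alg_sq:
  fixes z00 z10 z01 z11 :: complex
  assumes Q: "z00^2 + z10^2 + z01^2 + z11^2 - 2 * (z00*z10 + z10*z11 + z11*z01 + z01*z00) - 6 * (z00*z11 + z10*z01) = 0"
  shows "((z11 - z10 - z01 - 3*z00)/(2*r2))^2 = (z00+z10)*(z00+z01)"
    and "((z11 + z00 + 3*z10 - z01)/(2*r2))^2 = (z00+z10)*(z10+z11)"
    and "((z11 + z00 + 3*z01 - z10)/(2*r2))^2 = (z00+z01)*(z01+z11)"
    and "((3*z11 + z10 + z01 - z00)/(2*r2))^2 = (z00+z01+z10+z11 - z00 - z01)*(z01+z11)"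
    and "((z11 - z10 - z01 - 3*z00)/(2*r2)) * ((3*z11 + z10 + z01 - z00)/(2*r2))
         = ((z11 + z00 + 3*z01 - z10)/(2*r2)) * ((z11 + z00 + 3*z10 - z01)/(2*r2))"
proof -
  have e: "\<And>N::complex. (N/(2*r2))^2 = N^2/8" by (simp add: power_divide power_mult_distrib r2sq)
  have e2: "\<And>N M::complex. (N/(2*r2)) * (M/(2*r2)) = N*M/8"
    using r2sq by (simp add: field_simps power2_eq_square)
  show "((z11 - z10 - z01 - 3*z00)/(2*r2))^2 = (z00+z10)*(z00+z01)"
    unfolding e using Q by (simp add: field_simps) algebra
  show "((z11 + z00 + 3*z10 - z01)/(2*r2))^2 = (z00+z10)*(z10+z11)"
    unfolding e using Q by (simp add: field_simps) algebra
  show "((z11 + z00 + 3*z01 - z10)/(2*r2))^2 = (z00+z01)*(z01+z11)"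
    unfolding e using Q by (simp add: field_simps) algebra
  show "((3*z11 + z10 + z01 - z00)/(2*r2))^2 = (z00+z01+z10+z11 - z00 - z01)*(z01+z11)"
    unfolding e using Q by (simp add: field_simps) algebra
  show "((z11 - z10 - z01 - 3*z00)/(2*r2)) * ((3*z11 + z10 + z01 - z00)/(2*r2))
         = ((z11 + z00 + 3*z01 - z10)/(2*r2)) * ((z11 + z00 + 3*z10 - z01)/(2*r2))"
    unfolding e2 using Q by (simp add: field_simps) algebra
qed

lemma r2_inv: "2 / r2 = r2" using r2sq r2nz by (simp add: field_simps power2_eq_square)

lemma alg_lin:
  fixes za zb zc zd :: complex
  shows "(zd + za + 3*zc - zb)/(2*r2) = (zd - zb - zc - 3*za)/(2*r2) + r2 * (za+zc)"
    and "(zd + za + 3*zb - zc)/(2*r2) = (zd - zb - zc - 3*za)/(2*r2) + r2 * (za+zb)"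
proof -
  have k: "\<And>C. r2 * C = 4*C/(2*r2)"
  proof -
    fix C
    have "4*C/(2*r2) = (2/r2)*C" by (simp add: field_simps)
    then show "r2 * C = 4*C/(2*r2)" by (simp add: r2_inv)
  qed
  show "(zd + za + 3*zc - zb)/(2*r2) = (zd - zb - zc - 3*za)/(2*r2) + r2 * (za+zc)"
    unfolding k add_divide_distrib[symmetric] by (rule arg_cong[where f="\<lambda>t. t/(2*r2)"]) (simp add: algebra_simps)
  show "(zd + za + 3*zb - zc)/(2*r2) = (zd - zb - zc - 3*za)/(2*r2) + r2 * (za+zb)"
    unfolding k add_divide_distrib[symmetric] by (rule arg_cong[where f="\<lambda>t. t/(2*r2)"]) (simp add: algebra_simps)
qed

lemma q_sq:
  assumes "QC x (i,j) = 0"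
  shows "(q00 x i j)^2 = S1 x i j * S2 x i j"
    and "(q10 x i j)^2 = S1 x i j * S2 x (i+1) j"
    and "(q01 x i j)^2 = S2 x i j * S1 x i (j+1)"
    and "(q11 x i j)^2 = S2 x (i+1) j * S1 x i (j+1)"
    and "q00 x i j * q11 x i j = q01 x i j * q10 x i j"
  using alg_sq[of "x(i,j)" "x(i+1,j)" "x(i,j+1)" "x(i+1,j+1)"] assms
  by (simp_all add: QC_eq q00_def q01_def q10_def q11_def S1_def S2_def add.commute)

lemma q_lin:
  shows "q01 x i j = q00 x i j + r2 * S2 x i j"
    and "q10 x i j = q00 x i j + r2 * S1 x i j"
  using alg_lin[where zd="x(i+1,j+1)" and za="x(i,j)" and zc="x(i,j+1)" and zb="x(i+1,j)"]
  by (simp_all add: q00_def q01_def q10_def S1_def S2_def)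


definition zprod :: "(int \<Rightarrow> complex) \<Rightarrow> int \<Rightarrow> complex" where
  "zprod r n = (if 0 \<le> n then (\<Prod>k<nat n. r (int k)) else inverse (\<Prod>k<nat (-n). r (-1 - int k)))"

lemma zprod0[simp]: "zprod r 0 = 1" by (simp add: zprod_def)

lemma zprod_step:
  assumes nz: "\<And>k. r k \<noteq> 0"
  shows "zprod r (n+1) = r n * zprod r n"
proof (cases "0 \<le> n")
  case True
  then have "nat (n+1) = Suc (nat n)" by simp
  then show ?thesis using True by (simp add: zprod_def)
next
  case False
  show ?thesis
  proof (cases "n = -1")
    case True
    then show ?thesis using nz[of "-1"] by (simp add: zprod_def)
  next
    case F2: False
    then have n1: "\<not> 0 \<le> n + 1" using False by simp
    have e: "nat (-n) = Suc (nat (-(n+1)))" using False F2 by simp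
    have e2: "r (-1 - int (nat (-(n+1)))) = r n" using n1 by simp
    have "zprod r n = inverse ((\<Prod>k<nat (-(n+1)). r (-1 - int k)) * r n)"
      using False by (simp add: zprod_def e e2)
    then show ?thesis using n1 nz[of n] by (simp add: zprod_def field_simps)
  qed
qed

lemma zprod_nz: assumes "\<And>k. r k \<noteq> 0" shows "zprod r n \<noteq> 0"
  using assms by (simp add: zprod_def)

lemma int_equiv_induct:
  fixes P :: "int \<Rightarrow> bool"
  assumes "P 0" and "\<And>k. P k \<longleftrightarrow> P (k+1)"
  shows "P n"
proof (induct n rule: int_induct[where k=0])
  case base then show ?case using assms(1) .
next
  case (step1 i) then show ?case using assms(2) by blast
next
  case (step2 i) then show ?case using assms(2)[of "i-1"] by simp
qed



lemma step_equiv: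
  fixes H0 H1 G0 G1 qa qb qc qd pa pb na mc :: complex
  assumes h0: "G0 = (qb/qa) * H0" and h1: "G1 = (pb/pa) * H1"
    and v: "na * qd = mc * pb" and sq: "qa * qd = qb * qc"
    and nz: "qa \<noteq> 0" "pa \<noteq> 0" "na \<noteq> 0" "qb \<noteq> 0"
  shows "(H1 * qc = pa * H0) \<longleftrightarrow> (G1 * mc = na * G0)"
proof -
  have "(G1 * mc = na * G0) \<longleftrightarrow> (G1 * mc) * (pa*qa) = (na * G0) * (pa*qa)"
    using nz by simp
  also have "(G1 * mc) * (pa*qa) = pb * H1 * mc * qa" using h1 nz by simp
  also have "(na * G0) * (pa*qa) = na * qb * H0 * pa" using h0 nz by simp
  also have "pb * H1 * mc * qa = na * qd * H1 * qa" using v by (simp add: algebra_simps)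
  also have "na * qd * H1 * qa = na * qb * (H1 * qc)" using sq by (simp add: algebra_simps)
  also have "(na * qb * (H1 * qc) = na * qb * H0 * pa) \<longleftrightarrow> (H1 * qc = pa * H0)"
    using nz by (simp add: algebra_simps)
  finally show ?thesis by simp
qed

context
  fixes x :: "int \<times> int \<Rightarrow> complex"
  assumes QCz: "\<And>c. QC x c = 0"
    and PR: "\<And>v. prodQCv x v = - prodEdges x v"
    and NZ: "\<And>a b. x (a, b) + x (a+1, b) \<noteq> 0 \<and> x (a, b) + x (a, b+1) \<noteq> 0"
begin

lemma S1nz: "S1 x i j \<noteq> 0" using NZ by (simp add: S1_def)
lemma S2nz: "S2 x i j \<noteq> 0" using NZ by (simp add: S2_def)

lemmas qsq = q_sq[OF QCz]

lemma q00nz: "q00 x i j \<noteq> 0" using qsq(1)[of i j] S1nz S2nz by auto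
lemma q10nz: "q10 x i j \<noteq> 0" using qsq(2)[of i j] S1nz S2nz by auto
lemma q01nz: "q01 x i j \<noteq> 0" using qsq(3)[of i j] S1nz S2nz by auto

lemma vertex: "q00 x (i+1) (j+1) * q11 x i j = q10 x i (j+1) * q01 x (i+1) j"
proof -
  define X where "X = q10 x i (j+1) * q01 x (i+1) j"
  define Y where "Y = q00 x (i+1) (j+1) * q11 x i j"
  define P where "P = S1 x (i+1) (j+1) * S1 x i (j+1) * S2 x (i+1) (j+1) * S2 x (i+1) j"
  have "prodQCv x (i+1,j+1) = - prodEdges x (i+1,j+1)" by (rule PR)
  then have XY: "Y * X = P"
    by (simp add: prodQCv_q prodEdges_S X_def Y_def P_def algebra_simps)
  have "X^2 = P" unfolding X_def P_def power_mult_distrib qsq by (simp add: algebra_simps)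
  have Xnz: "X \<noteq> 0" unfolding X_def using q10nz q01nz by simp
  from XY \<open>X^2 = P\<close> have "X * (X - Y) = 0" by (simp add: algebra_simps power2_eq_square)
  with Xnz have "X = Y" by simp
  then show ?thesis unfolding X_def Y_def by simp
qed

definition h0 :: complex where "h0 = csqrt (S1 x 0 0)"
definition rho :: "int \<Rightarrow> complex" where "rho k = q00 x (k+1) 0 / q10 x k 0"
definition kap :: "int \<Rightarrow> int \<Rightarrow> complex" where "kap i j = q01 x i j / q00 x i j"
definition hh :: "int \<Rightarrow> int \<Rightarrow> complex" where "hh i j = h0 * zprod rho i * zprod (kap i) j"
definition ww :: "int \<Rightarrow> int \<Rightarrow> complex" where "ww i j = q00 x i j / hh i j"

lemma rho_nz: "rho k \<noteq> 0" using q00nz q10nz by (simp add: rho_def)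
lemma kap_nz: "kap i j \<noteq> 0" using q00nz q01nz by (simp add: kap_def)

lemma hh_up: "hh i (j+1) = kap i j * hh i j"
  unfolding hh_def zprod_step[of "kap i", OF kap_nz] by simp
lemma hh_right0: "hh (i+1) 0 = rho i * hh i 0"
  unfolding hh_def zprod_step[of rho, OF rho_nz] by simp

lemma h0sq: "h0^2 = S1 x 0 0" by (simp add: h0_def)

lemma hh_sq: "(hh i j)^2 = S1 x i j"
proof -
  have row: "(hh i 0)^2 = S1 x i 0" for i
  proof (induct i rule: int_equiv_induct)
    case 1 show ?case by (simp add: hh_def h0sq)
  next
    case (2 k)
    have r: "(rho k)^2 * S1 x k 0 = S1 x (k+1) 0"
      using qsq(1)[of "k+1" 0] qsq(2)[of k 0] q10nz[of k 0] S1nz[of k 0] S2nz[of "k+1" 0]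
      by (simp add: rho_def power_divide field_simps)
    have "(hh (k+1) 0)^2 = (rho k)^2 * (hh k 0)^2" by (simp add: hh_right0 power_mult_distrib)
    then show ?case using r rho_nz[of k] by (simp add: r[symmetric])
  qed
  show ?thesis
  proof (induct j rule: int_equiv_induct)
    case 1 show ?case by (rule row)
  next
    case (2 k)
    have r: "(kap i k)^2 * S1 x i k = S1 x i (k+1)"
      using qsq(1)[of i k] qsq(3)[of i k] q00nz[of i k] S1nz[of i k] S2nz[of i k]
      by (simp add: kap_def power_divide field_simps)
    have "(hh i (k+1))^2 = (kap i k)^2 * (hh i k)^2" by (simp add: hh_up power_mult_distrib)
    then show ?case using r kap_nz[of i k] by (simp add: r[symmetric])
  qed
qed

lemma hh_nz: "hh i j \<noteq> 0" using hh_sq[of i j] S1nz[of i j] by auto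

lemma ww_sq: "(ww i j)^2 = S2 x i j"
  using hh_sq[of i j] qsq(1)[of i j] hh_nz[of i j] S1nz[of i j]
  by (simp add: ww_def power_divide)

lemma hw: "hh i j * ww i j = q00 x i j" using hh_nz[of i j] by (simp add: ww_def)

lemma Trel: "hh (i+1) j * q10 x i j = q00 x (i+1) j * hh i j"
proof (induct j rule: int_equiv_induct)
  case 1 show ?case using q10nz[of i 0] by (simp add: hh_right0 rho_def)
next
  case (2 k)
  show ?case
    apply (rule step_equiv[where qa="q00 x i k" and qb="q01 x i k" and pa="q00 x (i+1) k"
        and pb="q01 x (i+1) k" and qc="q10 x i k" and qd="q11 x i k" and na="q00 x (i+1) (k+1)"
        and mc="q10 x i (k+1)"])
    apply (simp add: hh_up kap_def)
    apply (simp add: hh_up kap_def)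
    apply (rule vertex)
    apply (rule qsq(5))
    by (simp_all add: q00nz q01nz)
qed

lemma eq_z11: "x(i+1,j+1) = 3 * x(i,j) + x(i+1,j) + x(i,j+1) + 2 * r2 * hh i j * ww i j"
proof -
  have "2 * r2 * hh i j * ww i j = 2 * r2 * q00 x i j" using hw[of i j] by (simp add: mult.assoc)
  also have "\<dots> = x(i+1,j+1) - x(i+1,j) - x(i,j+1) - 3*x(i,j)" using r2nz by (simp add: q00_def)
  finally show ?thesis by simp
qed

lemma eq_top: "hh i (j+1) = hh i j + r2 * ww i j"
proof -
  have "hh i (j+1) * q00 x i j * hh i j = (hh i j + r2 * ww i j) * q00 x i j * hh i j"
  proof -
    have "hh i (j+1) * q00 x i j * hh i j = q01 x i j * (hh i j)^2"
      using q00nz[of i j] by (simp add: hh_up kap_def power2_eq_square)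
    also have "\<dots> = (q00 x i j + r2 * S2 x i j) * S1 x i j" by (simp add: q_lin hh_sq)
    also have "\<dots> = q00 x i j * (hh i j)^2 + r2 * (q00 x i j)^2"
      by (simp add: qsq hh_sq algebra_simps)
    also have "\<dots> = (hh i j + r2 * ww i j) * q00 x i j * hh i j"
      using hw[of i j] by (simp add: algebra_simps power2_eq_square)
    finally show ?thesis .
  qed
  then show ?thesis using q00nz[of i j] hh_nz[of i j] by simp
qed

lemma eq_right: "ww (i+1) j = ww i j + r2 * hh i j"
proof -
  have a: "ww (i+1) j = q10 x i j / hh i j"
    using Trel[of i j] q00nz[of "i+1" j] hh_nz[of i j] hh_nz[of "i+1" j]
    by (simp add: ww_def field_simps)
  have "q10 x i j = q00 x i j + r2 * (hh i j)^2" by (simp add: q_lin hh_sq)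
  then have "q10 x i j / hh i j = ww i j + r2 * hh i j"
    using hh_nz[of i j] by (simp add: ww_def field_simps power2_eq_square)
  then show ?thesis using a by simp
qed

end


definition xtd :: "(int \<times> int \<Rightarrow> complex) \<Rightarrow> real \<times> real \<Rightarrow> complex" where
  "xtd x p = (if fst p \<in> \<int> \<and> snd p \<in> \<int> then x (\<lfloor>fst p\<rfloor>, \<lfloor>snd p\<rfloor>)
     else if fst p - 1/2 \<in> \<int> \<and> snd p \<in> \<int> then hh x \<lfloor>fst p\<rfloor> \<lfloor>snd p\<rfloor>
     else if fst p \<in> \<int> \<and> snd p - 1/2 \<in> \<int> then ww x \<lfloor>fst p\<rfloor> \<lfloor>snd p\<rfloor> else 0)"

lemma half_notin: "(of_int a + 1/2 :: real) \<notin> \<int>"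
proof
  assume "(of_int a + 1/2 :: real) \<in> \<int>"
  then obtain k where "(of_int a + 1/2 :: real) = of_int k" by (auto elim: Ints_cases)
  then have "(2 * of_int k :: real) = 2 * of_int a + 1" by simp
  then have "2 * k = 2 * a + 1" by linarith
  then show False by presburger
qed

lemma floor_half: "\<lfloor>(of_int a + 1/2 :: real)\<rfloor> = a" by linarith

lemma xtd_int: "xtd x (of_int a, of_int b) = x (a,b)" by (simp add: xtd_def)
lemma xtd_h: "xtd x (of_int a + 1/2, of_int b) = hh x a b"
  using half_notin[of a] by (simp add: xtd_def floor_half)
lemma xtd_w: "xtd x (of_int a, of_int b + 1/2) = ww x a b"
  using half_notin[of b] by (simp add: xtd_def floor_half)

lemma xtd_10: "xtd x (of_int a + 1, of_int b) = x (a+1,b)" using xtd_int[of x "a+1" b] by simp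
lemma xtd_01: "xtd x (of_int a, of_int b + 1) = x (a,b+1)" using xtd_int[of x a "b+1"] by simp
lemma xtd_11: "xtd x (of_int a + 1, of_int b + 1) = x (a+1,b+1)" using xtd_int[of x "a+1" "b+1"] by simp
lemma xtd_h1: "xtd x (of_int a + 1/2, of_int b + 1) = hh x a (b+1)" using xtd_h[of x a "b+1"] by simp
lemma xtd_w1: "xtd x (of_int a + 1, of_int b + 1/2) = ww x (a+1) b" using xtd_w[of x "a+1" b] by (simp add: add.commute add.left_commute)

lemma ext_eqs_unf: "ext_eqs xt (a,b) \<longleftrightarrow>
   xt (of_int a + 1, of_int b + 1) = 3 * xt (of_int a, of_int b) + xt (of_int a + 1, of_int b) + xt (of_int a, of_int b + 1)
        + 2 * r2 * xt (of_int a + 1/2, of_int b) * xt (of_int a, of_int b + 1/2)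
 \<and> xt (of_int a + 1/2, of_int b + 1) = xt (of_int a + 1/2, of_int b) + r2 * xt (of_int a, of_int b + 1/2)
 \<and> xt (of_int a + 1, of_int b + 1/2) = xt (of_int a, of_int b + 1/2) + r2 * xt (of_int a + 1/2, of_int b)
 \<and> (xt (of_int a + 1/2, of_int b))^2 = xt (of_int a, of_int b) + xt (of_int a + 1, of_int b)
 \<and> (xt (of_int a, of_int b + 1/2))^2 = xt (of_int a, of_int b) + xt (of_int a, of_int b + 1)"
  unfolding ext_eqs_def Let_def r2_def by simp

lemma part_a:
  fixes x :: "int \<times> int \<Rightarrow> complex"
  assumes QCz: "\<forall>c. QC x c = 0"
    and PR: "\<forall>v. prodQCv x v = - prodEdges x v"
    and NZ: "\<forall>a b. x (a, b) + x (a+1, b) \<noteq> 0 \<and> x (a, b) + x (a, b+1) \<noteq> 0"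
  shows "\<exists>xt :: real \<times> real \<Rightarrow> complex. restr xt = x \<and> (\<forall>v. ext_eqs xt v)"
proof (intro exI conjI allI)
  show "restr (xtd x) = x" by (auto simp: restr_def xtd_int)
  fix v :: "int \<times> int"
  obtain a b where v: "v = (a,b)" by (cases v)
  have A: "\<And>c. QC x c = 0" "\<And>v. prodQCv x v = - prodEdges x v"
     "\<And>a b. x (a, b) + x (a+1, b) \<noteq> 0 \<and> x (a, b) + x (a, b+1) \<noteq> 0" using assms by auto
  show "ext_eqs (xtd x) v"
    unfolding v ext_eqs_unf xtd_int xtd_10 xtd_01 xtd_11 xtd_h xtd_w xtd_h1 xtd_w1
    using eq_z11[OF A, of a b] eq_top[OF A, of a b] eq_right[OF A, of a b]
      hh_sq[OF A, of a b] ww_sq[OF A, of a b]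
    by (simp add: S1_def S2_def)
qed

lemma alg_QC:
  fixes za zb zc zd h w :: complex
  assumes "zd = 3*za + zb + zc + 2*r2*h*w" "h^2 = za + zb" "w^2 = za + zc"
  shows "za^2 + zb^2 + zc^2 + zd^2 - 2 * (za*zb + zb*zd + zd*zc + zc*za) - 6 * (za*zd + zb*zc) = 0"
proof -
  have "za^2 + zb^2 + zc^2 + zd^2 - 2 * (za*zb + zb*zd + zd*zc + zc*za) - 6 * (za*zd + zb*zc)
     = (zd - 3*za - zb - zc)^2 - 8 * (za+zb)*(za+zc)"
    by (simp add: power2_eq_square algebra_simps)
  also have "(zd - 3*za - zb - zc)^2 = 4 * r2^2 * h^2 * w^2" using assms(1)
    by (simp add: power2_eq_square algebra_simps)
  also have "\<dots> = 8 * (za+zb)*(za+zc)" using assms(2,3) r2sq by simp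
  finally show ?thesis by simp
qed

lemma alg_q:
  fixes za zb zc zd h w :: complex
  assumes "zd = 3*za + zb + zc + 2*r2*h*w" "h^2 = za + zb" "w^2 = za + zc"
  shows "(zd - zb - zc - 3*za)/(2*r2) = h * w"
    and "(zd + za + 3*zb - zc)/(2*r2) = h * (w + r2 * h)"
    and "(zd + za + 3*zc - zb)/(2*r2) = w * (h + r2 * w)"
    and "(3*zd + zb + zc - za)/(2*r2) = (h + r2 * w) * (w + r2 * h)"
proof -
  have zb: "zb = h^2 - za" and zc: "zc = w^2 - za" using assms by auto
  have k: "\<And>N M. N = 2*r2*M \<Longrightarrow> N/(2*r2) = M" using r2nz by simp
  have rr: "r2 * r2 = 2" using r2sq by (simp add: power2_eq_square)
  have rr3: "r2 * (r2 * u) = 2 * u" for u using rr by (simp add: mult.assoc[symmetric])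
  show "(zd - zb - zc - 3*za)/(2*r2) = h * w" by (rule k) (simp add: assms(1))
  show "(zd + za + 3*zb - zc)/(2*r2) = h * (w + r2 * h)"
    by (rule k) (simp add: assms(1) zb zc algebra_simps power2_eq_square rr rr3)
  show "(zd + za + 3*zc - zb)/(2*r2) = w * (h + r2 * w)"
    by (rule k) (simp add: assms(1) zb zc algebra_simps power2_eq_square rr rr3)
  show "(3*zd + zb + zc - za)/(2*r2) = (h + r2 * w) * (w + r2 * h)"
    by (rule k) (simp add: assms(1) zb zc algebra_simps power2_eq_square rr rr3)
qed

lemma part_b:
  fixes xt :: "real \<times> real \<Rightarrow> complex"
  assumes E: "\<forall>v. ext_eqs xt v"
  shows "(\<forall>c. QC (restr xt) c = 0) \<and> (\<forall>v. prodQCv (restr xt) v = - prodEdges (restr xt) v)"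
proof -
  define x where "x = restr xt"
  define h where "h a b = xt (of_int a + 1/2, of_int b)" for a b :: int
  define w where "w a b = xt (of_int a, of_int b + 1/2)" for a b :: int
  have xi: "xt (of_int a, of_int b) = x (a,b)" for a b by (simp add: x_def restr_def)
  have x10: "xt (of_int a + 1, of_int b) = x (a+1,b)" for a b by (simp add: x_def restr_def)
  have x01: "xt (of_int a, of_int b + 1) = x (a,b+1)" for a b by (simp add: x_def restr_def)
  have x11: "xt (of_int a + 1, of_int b + 1) = x (a+1,b+1)" for a b by (simp add: x_def restr_def)
  have h1: "xt (of_int a + 1/2, of_int b + 1) = h a (b+1)" for a b by (simp add: h_def)
  have w1: "xt (of_int a + 1, of_int b + 1/2) = w (a+1) b" for a b by (simp add: w_def add.commute add.left_commute)
  have R: "x(a+1,b+1) = 3*x(a,b) + x(a+1,b) + x(a,b+1) + 2*r2*h a b*w a b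
       \<and> h a (b+1) = h a b + r2 * w a b \<and> w (a+1) b = w a b + r2 * h a b
       \<and> (h a b)^2 = x(a,b) + x(a+1,b) \<and> (w a b)^2 = x(a,b) + x(a,b+1)" for a b
    using E[rule_format, of "(a,b)"] unfolding ext_eqs_unf xi x10 x01 x11 h1 w1
    by (simp add: h_def[symmetric] w_def[symmetric])
  have QCx: "QC x c = 0" for c
  proof -
    obtain a b where c: "c = (a,b)" by (cases c)
    show ?thesis unfolding c QC_eq using R[of a b] by (intro alg_QC) auto
  qed
  have qf: "q00 x a b = h a b * w a b" "q10 x a b = h a b * w (a+1) b"
      "q01 x a b = w a b * h a (b+1)" "q11 x a b = h a (b+1) * w (a+1) b" for a b
    using alg_q[of "x(a+1,b+1)" "x(a,b)" "x(a+1,b)" "x(a,b+1)" "h a b" "w a b"] R[of a b]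
    by (auto simp: q00_def q10_def q01_def q11_def)
  have PRx: "prodQCv x v = - prodEdges x v" for v
  proof -
    obtain a b where v: "v = (a,b)" by (cases v)
    have s1: "S1 x a b = (h a b)^2" "S1 x (a-1) b = (h (a-1) b)^2" using R[of a b] R[of "a-1" b]
      by (auto simp: S1_def)
    have s2: "S2 x a b = (w a b)^2" "S2 x a (b-1) = (w a (b-1))^2" using R[of a b] R[of a "b-1"]
      by (auto simp: S2_def)
    show ?thesis unfolding v prodQCv_q prodEdges_S qf s1 s2
      by (simp add: power2_eq_square algebra_simps)
  qed
  show ?thesis using QCx PRx by (simp add: x_def)
qed


theorem theorem5p9:
  shows "(\<forall>x :: int \<times> int \<Rightarrow> complex.
            (\<forall>c. QC x c = 0)
          \<and> (\<forall>v. prodQCv x v = - prodEdges x v)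
          \<and> (\<forall>a b. x (a, b) + x (a+1, b) \<noteq> 0 \<and> x (a, b) + x (a, b+1) \<noteq> 0)
          \<longrightarrow> (\<exists>xt :: real \<times> real \<Rightarrow> complex. restr xt = x \<and> (\<forall>v. ext_eqs xt v)))
       \<and> (\<forall>xt :: real \<times> real \<Rightarrow> complex.
            (\<forall>v. ext_eqs xt v)
          \<longrightarrow> (\<forall>c. QC (restr xt) c = 0) \<and> (\<forall>v. prodQCv (restr xt) v = - prodEdges (restr xt) v))"
  using part_a part_b by blast

end
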